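(* Let $(S,\alpha)$ be a twisted K3 surface, $d=\mathrm{ord}(\alpha)$, $B\in\frac1dH^2(S,\mathbb Z)$ a B-field lift of $\alpha$. Put $\widetilde M=\langle\widetilde{NS}(S,B),(0,0,-\tfrac1d)\rangle$ and $\widetilde T=\langle T(S,B),y\rangle$, where $y\in T(S,B)^\vee$ represents $\lambda([(0,0,-\frac1d)])$. Let $\lambda_0:D_{\widetilde{NS}(S)}\to D_{T(S)}$ be the natural isomorphism and $\bar\lambda:D_{\widetilde M}\to D_{\widetilde T}$ the isomorphism induced by $\lambda$. Then $$\bar\lambda\circ (e^B\circ\kappa)_* = (e^B)_*\circ\lambda_0:\ D_{\widetilde{NS}(S)}\to D_{\widetilde T},$$ where $(e^B\circ\kappa)_*:D_{\widetilde{NS}(S)}\to D_{\widetilde M}$ and $(e^B)_*:D_{T(S)}\to D_{\widetilde T}$ are induced by the isometries $e^B\circ\kappa:\widetilde{NS}(S)\cong\widetilde M$ and $e^B:T(S)\cong\widetilde T$.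
   Context: $S$ is a complex projective K3 surface with $NS(S)$, $T(S)=NS(S)^\perp\subset H^2(S,\mathbb Z)$ and holomorphic 2-form class $\omega_S$. Mukai lattice $\widetilde H(S,\mathbb Z)=H^0\oplus H^2\oplus H^4$, elements $(a,l,b)$, pairing $((a,l,b),(a',l',b'))=(l,l')-ab'-a'b$; $\widetilde{NS}(S)=H^0\oplus NS(S)\oplus H^4$. $e^B(a,l,b)=(a,l+aB,b+(B,l)+\frac a2(B,B))$. A B-field lift of $\alpha\in \mathrm{Br}(S)\cong H^2(S,\mathbb Q)/(NS(S)_{\mathbb Q}+H^2(S,\mathbb Z))$ is a preimage $B$. $\widetilde{NS}(S,B)=e^B(\omega_S)^\perp\cap\widetilde H(S,\mathbb Z)$, $T(S,B)$ its orthogonal complement in $\widetilde H(S,\mathbb Z)$. $\kappa(a,l,b)=(da,l,b/d)$. It is known that $e^B\circ\kappa$ maps $\widetilde{NS}(S)$ isometrically onto $\widetilde M$ and $e^B$ maps $T(S)$ isometrically onto $\widetilde T$. For an even lattice $L$, $D_L=L^\vee/L$. The natural isometry $\lambda:D_{\widetilde{NS}(S,B)}\to D_{T(S,B)}$ sends $[x]$ to $[y']$ where $x+y'\in\widetilde H(S,\mathbb Z)$; likewise $\lambda_0:D_{\widetilde{NS}(S)}\cong D_{NS(S)}\to D_{T(S)}$ sends $[x]$ to $[y']$ with $x+y'\in H^2(S,\mathbb Z)$. Since $\widetilde M/\widetilde{NS}(S,B)$ is generated by the isotropic element $h=[(0,0,-\frac1d)]$, $D_{\widetilde M}=h^\perp/\langle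 h\rangle$ and $D_{\widetilde T}=\lambda(h)^\perp/\langle\lambda(h)\rangle$; $\bar\lambda$ is the isomorphism induced by $\lambda$ on these subquotients. *)

theory Defs
  imports Complex_Main
begin

section \<open>The K3 lattice (a marking H^2(S,Z) = U^3 + E8(-1)^2)\<close>

text \<open>Cohomology classes in H^2(S,K) (K = Q or C) are coordinate functions
  nat => K, supported on the indices 0..21 (coordinates w.r.t. a Z-basis of
  H^2(S,Z) chosen by a marking).\<close>

definition e8 :: "nat \<Rightarrow> nat \<Rightarrow> int" where
  "e8 i j = (if i = j then 2
     else if (i, j) \<in> {(0,2),(2,0),(2,3),(3,2),(3,4),(4,3),(4,5),(5,4),
                        (5,6),(6,5),(6,7),(7,6),(1,3),(3,1)} then -1 else 0)"

definition k3g :: "nat \<Rightarrow> nat \<Rightarrow> int" where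
  "k3g i j =
    (if i < 6 \<and> j < 6 then (if i div 2 = j div 2 \<and> i \<noteq> j then 1 else 0)
     else if 6 \<le> i \<and> i < 14 \<and> 6 \<le> j \<and> j < 14 then - e8 (i - 6) (j - 6)
     else if 14 \<le> i \<and> i < 22 \<and> 14 \<le> j \<and> j < 22 then - e8 (i - 14) (j - 14)
     else 0)"

definition bil :: "(nat \<Rightarrow> 'a::comm_ring_1) \<Rightarrow> (nat \<Rightarrow> 'a) \<Rightarrow> 'a" where
  "bil x y = (\<Sum>i<22. \<Sum>j<22. of_int (k3g i j) * x i * y j)"

definition H2 :: "(nat \<Rightarrow> rat) set" where
  "H2 = {l. \<forall>i\<ge>22. l i = 0}"

definition H2Z :: "(nat \<Rightarrow> rat) set" where
  "H2Z = {l \<in> H2. \<forall>i<22. l i \<in> \<int>}"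

definition cpx :: "(nat \<Rightarrow> rat) \<Rightarrow> nat \<Rightarrow> complex" where
  "cpx l i = of_rat (l i)"

definition vadd :: "(nat \<Rightarrow> rat) \<Rightarrow> (nat \<Rightarrow> rat) \<Rightarrow> nat \<Rightarrow> rat" where
  "vadd x y i = x i + y i"

definition vsmul :: "rat \<Rightarrow> (nat \<Rightarrow> rat) \<Rightarrow> nat \<Rightarrow> rat" where
  "vsmul c x i = c * x i"

text \<open>NS(S) = omega^perp in H^2(S,Z) (Lefschetz (1,1)), T(S) = NS(S)^perp.\<close>

definition NS :: "(nat \<Rightarrow> complex) \<Rightarrow> (nat \<Rightarrow> rat) set" where
  "NS \<omega> = {l \<in> H2Z. bil \<omega> (cpx l) = 0}"

definition TS :: "(nat \<Rightarrow> complex) \<Rightarrow> (nat \<Rightarrow> rat) set" where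
  "TS \<omega> = {l \<in> H2Z. \<forall>n\<in>NS \<omega>. bil l n = 0}"

definition h2_qspan :: "(nat \<Rightarrow> rat) set \<Rightarrow> (nat \<Rightarrow> rat) set" where
  "h2_qspan L = {x \<in> H2. \<exists>m::nat. m > 0 \<and> vsmul (of_nat m) x \<in> L}"

definition h2_dual :: "(nat \<Rightarrow> rat) set \<Rightarrow> (nat \<Rightarrow> rat) set" where
  "h2_dual L = {x \<in> h2_qspan L. \<forall>v\<in>L. bil x v \<in> \<int>}"

text \<open>A projective K3 surface (marked): period omega with (omega,omega)=0,
  (omega, conj omega) > 0, and NS(S) contains a class of positive square.\<close>

definition K3_period :: "(nat \<Rightarrow> complex) \<Rightarrow> bool" where
  "K3_period \<omega> \<longleftrightarrow> (\<forall>i\<ge>22. \<omega> i = 0) \<and> bil \<omega> \<omega> = 0 \<and>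
     Im (bil \<omega> (\<lambda>i. cnj (\<omega> i))) = 0 \<and> Re (bil \<omega> (\<lambda>i. cnj (\<omega> i))) > 0 \<and>
     (\<exists>h\<in>NS \<omega>. bil h h > 0)"

text \<open>Br(S) = H^2(S,Q) / (NS(S)_Q + H^2(S,Z)); br_zero says the class is 0.\<close>

definition br_zero :: "(nat \<Rightarrow> complex) \<Rightarrow> (nat \<Rightarrow> rat) \<Rightarrow> bool" where
  "br_zero \<omega> x \<longleftrightarrow> (\<exists>p q. p \<in> h2_qspan (NS \<omega>) \<and> q \<in> H2Z \<and> x = vadd p q)"

definition br_ord :: "(nat \<Rightarrow> complex) \<Rightarrow> (nat \<Rightarrow> rat) \<Rightarrow> nat" where
  "br_ord \<omega> B = (LEAST n::nat. n > 0 \<and> br_zero \<omega> (vsmul (of_nat n) B))"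

type_synonym 'a mv = "'a \<times> (nat \<Rightarrow> 'a) \<times> 'a"

definition madd :: "'a::comm_ring_1 mv \<Rightarrow> 'a mv \<Rightarrow> 'a mv" where
  "madd v w = (case v of (a, l, b) \<Rightarrow> case w of (a', l', b') \<Rightarrow>
     (a + a', \<lambda>i. l i + l' i, b + b'))"

definition msub :: "'a::comm_ring_1 mv \<Rightarrow> 'a mv \<Rightarrow> 'a mv" where
  "msub v w = (case v of (a, l, b) \<Rightarrow> case w of (a', l', b') \<Rightarrow>
     (a - a', \<lambda>i. l i - l' i, b - b'))"

definition msmul :: "'a::comm_ring_1 \<Rightarrow> 'a mv \<Rightarrow> 'a mv" where
  "msmul c v = (case v of (a, l, b) \<Rightarrow> (c * a, \<lambda>i. c * l i, c * b))"

definition mpair :: "'a::comm_ring_1 mv \<Rightarrow> 'a mv \<Rightarrow> 'a" where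
  "mpair v w = (case v of (a, l, b) \<Rightarrow> case w of (a', l', b') \<Rightarrow>
     bil l l' - a * b' - a' * b)"

definition mcpx :: "rat mv \<Rightarrow> complex mv" where
  "mcpx v = (case v of (a, l, b) \<Rightarrow> (of_rat a, cpx l, of_rat b))"

definition MZ :: "rat mv set" where
  "MZ = {(a, l, b). a \<in> \<int> \<and> l \<in> H2Z \<and> b \<in> \<int>}"

definition MQ :: "rat mv set" where
  "MQ = {(a, l, b). l \<in> H2}"

definition m_qspan :: "rat mv set \<Rightarrow> rat mv set" where
  "m_qspan L = {x \<in> MQ. \<exists>m::nat. m > 0 \<and> msmul (of_nat m) x \<in> L}"

definition m_dual :: "rat mv set \<Rightarrow> rat mv set" where
  "m_dual L = {x \<in> m_qspan L. \<forall>v\<in>L. mpair x v \<in> \<int>}"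

definition eB :: "(nat \<Rightarrow> 'a::field) \<Rightarrow> 'a mv \<Rightarrow> 'a mv" where
  "eB B v = (case v of (a, l, b) \<Rightarrow>
     (a, \<lambda>i. l i + a * B i, b + bil B l + a / 2 * bil B B))"

definition kappa :: "nat \<Rightarrow> rat mv \<Rightarrow> rat mv" where
  "kappa d v = (case v of (a, l, b) \<Rightarrow> (of_nat d * a, l, b / of_nat d))"

text \<open>NS~(S) = H^0 + NS(S) + H^4.\<close>

definition NSt :: "(nat \<Rightarrow> complex) \<Rightarrow> rat mv set" where
  "NSt \<omega> = {(a, l, b) \<in> MZ. l \<in> NS \<omega>}"

definition NSB :: "(nat \<Rightarrow> complex) \<Rightarrow> (nat \<Rightarrow> rat) \<Rightarrow> rat mv set" where
  "NSB \<omega> B = {v \<in> MZ. mpair (eB (cpx B) (0, \<omega>, 0)) (mcpx v) = 0}"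

definition TB :: "(nat \<Rightarrow> complex) \<Rightarrow> (nat \<Rightarrow> rat) \<Rightarrow> rat mv set" where
  "TB \<omega> B = {v \<in> MZ. \<forall>u\<in>NSB \<omega> B. mpair v u = 0}"

definition gen_by :: "rat mv set \<Rightarrow> rat mv \<Rightarrow> rat mv set" where
  "gen_by L g = {madd u (msmul (of_int k) g) | u k. u \<in> L}"

end

theory Submission imports Defs begin
lemma e8_sym: "e8 i j = e8 j i" unfolding e8_def by auto
lemma k3g_sym: "k3g i j = k3g j i" unfolding k3g_def by (auto simp: e8_sym)
lemma k3g_diag: "even (k3g i i)" unfolding k3g_def e8_def by auto

lemma bil_sym: "bil x y = bil y x"
  unfolding bil_def
  by (subst sum.swap) (simp add: k3g_sym mult_ac)

lemma bil_lin_right: "bil x (\<lambda>i. p * y i + q * z i) = p * bil x y + q * bil x z"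
  by (simp add: bil_def algebra_simps sum.distrib sum_distrib_left)

lemma bil_Ints: assumes "\<forall>i<22. x i \<in> \<int>" "\<forall>i<22. y i \<in> \<int>"
  shows "bil x y \<in> \<int>"
  unfolding bil_def using assms by (intro Ints_sum Ints_mult) auto

lemma quad_even_int:
  fixes x :: "nat \<Rightarrow> int"
  shows "even (\<Sum>i<n. \<Sum>j<n. k3g i j * x i * x j)"
proof (induction n)
  case 0 then show ?case by simp
next
  case (Suc n)
  have e: "(\<Sum>i<n. k3g i n * x i * x n) = (\<Sum>j<n. k3g n j * x n * x j)"
    by (simp add: k3g_sym mult_ac)
  have "(\<Sum>i<Suc n. \<Sum>j<Suc n. k3g i j * x i * x j) =
     (\<Sum>i<n. \<Sum>j<n. k3g i j * x i * x j) + 2 * (\<Sum>j<n. k3g n j * x n * x j) + k3g n n * x n * x n"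
    using e by (simp add: sum.distrib)
  then show ?case using Suc k3g_diag by simp
qed

lemma bil_even: assumes "\<forall>i<22. x i \<in> \<int>"
  shows "bil x x / 2 \<in> (\<int> :: rat set)"
proof -
  define xi where "xi i = \<lfloor>x i\<rfloor>" for i
  have xe: "i < 22 \<Longrightarrow> x i = of_int (xi i)" for i using assms xi_def by auto
  have "bil x x = of_int (\<Sum>i<22. \<Sum>j<22. k3g i j * xi i * xi j)"
    unfolding bil_def by (simp add: xe)
  moreover obtain k where "(\<Sum>i<22. \<Sum>j<22. k3g i j * xi i * xi j) = 2 * k"
    using quad_even_int by blast
  ultimately show ?thesis by simp
qed
lemma bil_smul_left: "bil (\<lambda>i. c * x i) y = c * bil x y"
  by (simp add: bil_def algebra_simps sum_distrib_left)
lemma bil_smul_right: "bil x (\<lambda>i. c * y i) = c * bil x y"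
  by (simp add: bil_def algebra_simps sum_distrib_left)
lemma bil_add_right: "bil x (\<lambda>i. y i + z i) = bil x y + bil x z"
  by (simp add: bil_def algebra_simps sum.distrib)
lemma bil_lin3_left: "bil (\<lambda>i. x i - y i + c * w i) v = bil x v - bil y v + c * bil w v"
  by (simp add: bil_def algebra_simps sum.distrib sum_subtractf sum_distrib_left)
lemma bil_diff_smul_right: "bil x (\<lambda>i. y i - c * w i) = bil x y - c * bil x w"
  by (simp add: bil_def algebra_simps sum_subtractf sum_distrib_left)

lemma mpair_smul: "mpair (msmul c x) v = c * mpair x v"
  by (cases x; cases v) (simp add: msmul_def mpair_def bil_smul_left algebra_simps)

lemma zero_NS: "(\<lambda>_. 0) \<in> NS \<omega>"
  by (simp add: NS_def H2Z_def H2_def cpx_def bil_def)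

lemma d_pos:
  assumes "B \<in> H2" shows "br_ord \<omega> B > 0"
proof -
  define n where "n = (\<Prod>i<22. snd (quotient_of (B i)))"
  have npos: "n > 0" unfolding n_def
    by (intro prod_pos) (simp add: quotient_of_denom_pos')
  have "vsmul (of_int n) B \<in> H2Z"
  proof -
    have "of_int n * B i \<in> \<int>" if "i < 22" for i
    proof -
      obtain p q where pq: "quotient_of (B i) = (p, q)" by fastforce
      have qd: "q dvd n" unfolding n_def using that pq
        by (metis dvd_prodI finite_lessThan lessThan_iff snd_conv)
      then obtain r where r: "n = q * r" by blast
      have "B i = of_int p / of_int q" using pq quotient_of_div by blast
      moreover have "q > 0" using pq quotient_of_denom_pos by blast
      ultimately have "of_int n * B i = of_int (r * p)" using r by (simp add: field_simps)
      then show ?thesis by simp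
    qed
    then show ?thesis using assms by (auto simp: H2Z_def H2_def vsmul_def)
  qed
  moreover have "(\<lambda>_. 0) \<in> h2_qspan (NS \<omega>)"
  proof -
    have "vsmul 1 (\<lambda>_. 0) = (\<lambda>_. (0::rat))" by (rule ext) (simp add: vsmul_def)
    then show ?thesis using zero_NS by (auto simp: h2_qspan_def H2_def intro!: exI[of _ 1])
  qed
  ultimately have "br_zero \<omega> (vsmul (of_nat (nat n)) B)"
    unfolding br_zero_def vadd_def using npos
    by (intro exI[of _ "\<lambda>_. 0"] exI[of _ "vsmul (of_int n) B"]) auto
  then have "\<exists>k::nat. k > 0 \<and> br_zero \<omega> (vsmul (of_nat k) B)" using npos
    by (intro exI[of _ "nat n"]) auto
  then show ?thesis unfolding br_ord_def by (metis (mono_tags, lifting) LeastI_ex)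
qed
theorem proposition2p5:
  fixes \<omega> :: "nat \<Rightarrow> complex" and B :: "nat \<Rightarrow> rat" and d :: nat
    and y :: "rat mv"
  assumes K3: "K3_period \<omega>"
    and B_H2: "B \<in> H2"
    and d_ord: "d = br_ord \<omega> B"
    and B_frac: "vsmul (of_nat d) B \<in> H2Z"
    and y_dual: "y \<in> m_dual (TB \<omega> B)"
    and y_rep: "madd (0, \<lambda>_. 0, - 1 / of_nat d) y \<in> MZ"
  shows "\<forall>X y' z.
           X \<in> m_dual (NSt \<omega>) \<longrightarrow>
           y' \<in> h2_dual (TS \<omega>) \<longrightarrow>
           vadd (fst (snd X)) y' \<in> H2Z \<longrightarrow>
           z \<in> m_dual (TB \<omega> B) \<longrightarrow>
           madd (eB B (kappa d X)) z \<in> MZ \<longrightarrow>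
           msub z (eB B (0, y', 0)) \<in> gen_by (TB \<omega> B) y"
proof (intro allI impI)
  fix X y' z
  assume hX: "X \<in> m_dual (NSt \<omega>)" and hy': "y' \<in> h2_dual (TS \<omega>)"
    and hl: "vadd (fst (snd X)) y' \<in> H2Z" and hz: "z \<in> m_dual (TB \<omega> B)"
    and hP: "madd (eB B (kappa d X)) z \<in> MZ"
  obtain a l b where X: "X = (a, l, b)" by (cases X)
  obtain z1 z2 z3 where Z: "z = (z1, z2, z3)" by (cases z)
  obtain y1 y2 y3 where Y: "y = (y1, y2, y3)" by (cases y)
  have dpos: "d > 0" using d_pos[OF B_H2] d_ord by simp
  have zNSt1: "(1, \<lambda>_. 0, 0) \<in> NSt \<omega>" and zNSt2: "(0, \<lambda>_. 0, 1) \<in> NSt \<omega>"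
    using zero_NS by (auto simp: NSt_def MZ_def NS_def)
  have "mpair X (1, \<lambda>_. 0, 0) \<in> \<int>" "mpair X (0, \<lambda>_. 0, 1) \<in> \<int>"
    using hX zNSt1 zNSt2 by (auto simp: m_dual_def)
  then have aZ: "a \<in> \<int>" and bZ: "b \<in> \<int>"
    by (auto simp: X mpair_def bil_def)
  have lH2: "l \<in> H2" using hX by (auto simp: X m_dual_def m_qspan_def MQ_def)
  have y'H2: "y' \<in> H2" using hy' by (auto simp: h2_dual_def h2_qspan_def)
  obtain my where my: "my > 0" "vsmul (of_nat my) y' \<in> TS \<omega>"
    using hy' by (auto simp: h2_dual_def h2_qspan_def)
  have z2H2: "z2 \<in> H2" using hz by (auto simp: Z m_dual_def m_qspan_def MQ_def)
  obtain mz where mz: "mz > 0" "msmul (of_nat mz) z \<in> TB \<omega> B"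
    using hz by (auto simp: m_dual_def m_qspan_def)
  have y2H2: "y2 \<in> H2" using y_dual by (auto simp: Y m_dual_def m_qspan_def MQ_def)
  obtain myy where myy: "myy > 0" "msmul (of_nat myy) y \<in> TB \<omega> B"
    using y_dual by (auto simp: m_dual_def m_qspan_def)
  have y1Z: "y1 \<in> \<int>" and y2Z: "\<forall>i<22. y2 i \<in> \<int>" and y3Z: "- 1 / of_nat d + y3 \<in> \<int>"
    using y_rep by (auto simp: Y madd_def MZ_def H2Z_def)
  have P1: "of_nat d * a + z1 \<in> \<int>"
    and P2: "\<forall>i<22. l i + of_nat d * a * B i + z2 i \<in> \<int>"
    and P3: "b / of_nat d + bil B l + of_nat d * a / 2 * bil B B + z3 \<in> \<int>"
    using hP by (auto simp: X Z madd_def MZ_def H2Z_def eB_def kappa_def)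
  have dB: "\<forall>i<22. of_nat d * B i \<in> \<int>" using B_frac by (auto simp: H2Z_def vsmul_def)
  have ly: "\<forall>i<22. l i + y' i \<in> \<int>" using hl by (auto simp: X H2Z_def vadd_def)
  define N where "N = b + bil (\<lambda>i. of_nat d * B i) (\<lambda>i. l i + y' i)
       + a * (bil (\<lambda>i. of_nat d * B i) (\<lambda>i. of_nat d * B i) / 2)"
  have NZ: "N \<in> \<int>" unfolding N_def
    using bZ aZ bil_Ints[OF dB ly] bil_even[OF dB] by (intro Ints_add Ints_mult) auto
  then obtain Ni where Ni: "N = of_int Ni" by (auto elim: Ints_cases)
  have Nd: "N / of_nat d = b / of_nat d + bil B l + of_nat d * a / 2 * bil B B + bil B y'"
  proof -
    have e1: "bil (\<lambda>i. of_nat d * B i) (\<lambda>i. l i + y' i) = of_nat d * (bil B l + bil B y')"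
      by (simp only: bil_smul_left bil_add_right)
    have e2: "bil (\<lambda>i. of_nat d * B i) (\<lambda>i. of_nat d * B i) = of_nat d * (of_nat d * bil B B)"
      by (simp only: bil_smul_left bil_smul_right)
    show ?thesis using dpos unfolding N_def e1 e2 by (simp add: field_simps)
  qed
  have G: "msub z (eB B (0, y', 0)) = (z1, \<lambda>i. z2 i - y' i, z3 - bil B y')"
    by (simp add: Z msub_def eB_def)
  define u where "u = (z1 + N * y1, \<lambda>i. z2 i - y' i + N * y2 i, z3 - bil B y' + N * y3)"
  have uMZ: "u \<in> MZ"
  proof -
    have "z1 + N * y1 = (of_nat d * a + z1) - of_nat d * a + N * y1" by simp
    then have u1: "z1 + N * y1 \<in> \<int>" using P1 aZ NZ y1Z by (metis Ints_add Ints_diff Ints_mult Ints_of_nat)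
    have u2: "z2 i - y' i + N * y2 i \<in> \<int>" if "i < 22" for i
    proof -
      have "z2 i - y' i + N * y2 i = (l i + of_nat d * a * B i + z2 i) - (l i + y' i) - a * (of_nat d * B i) + N * y2 i"
        by (simp add: algebra_simps)
      then show ?thesis using P2 ly dB aZ NZ y2Z that by (metis Ints_add Ints_diff Ints_mult)
    qed
    have u3: "z3 - bil B y' + N * y3 \<in> \<int>"
    proof -
      have "z3 - bil B y' + N * y3 = (b / of_nat d + bil B l + of_nat d * a / 2 * bil B B + z3) + N * (- 1 / of_nat d + y3)"
        using Nd dpos by (simp add: field_simps)
      then show ?thesis using P3 NZ y3Z by (metis Ints_add Ints_mult)
    qed
    have "(\<lambda>i. z2 i - y' i + N * y2 i) \<in> H2Z"
      using u2 z2H2 y'H2 y2H2 by (auto simp: H2Z_def H2_def)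
    then show ?thesis using u1 u3 by (simp add: u_def MZ_def)
  qed
  have uorth: "mpair u v = 0" if v: "v \<in> NSB \<omega> B" for v
  proof -
    obtain v1 v2 v3 where V: "v = (v1, v2, v3)" by (cases v)
    have vMZ: "v1 \<in> \<int>" "v2 \<in> H2Z" using v by (auto simp: V NSB_def MZ_def)
    have "mpair (eB (cpx B) (0, \<omega>, 0)) (mcpx v) = 0" using v by (simp add: NSB_def)
    then have om: "bil \<omega> (cpx v2) - of_rat v1 * bil (cpx B) \<omega> = 0"
      by (simp add: V eB_def mpair_def mcpx_def)
    define w where "w = (\<lambda>i. v2 i - v1 * B i)"
    have cw: "cpx w = (\<lambda>i. cpx v2 i - of_rat v1 * cpx B i)"
      by (rule ext) (simp add: w_def cpx_def of_rat_diff of_rat_mult)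
    have omw: "bil \<omega> (cpx w) = 0" using om unfolding cw
      by (simp add: bil_diff_smul_right bil_sym[of "cpx B"])
    have dw: "vsmul (of_nat d) w \<in> NS \<omega>"
    proof -
      have "of_nat d * w i \<in> \<int>" if "i < 22" for i
      proof -
        have "of_nat d * w i = of_nat d * v2 i - v1 * (of_nat d * B i)"
          by (simp add: w_def algebra_simps)
        then show ?thesis using vMZ dB that by (auto simp: H2Z_def)
      qed
      moreover have "w \<in> H2" using vMZ B_H2 by (auto simp: w_def H2Z_def H2_def)
      moreover have "cpx (vsmul (of_nat d) w) = (\<lambda>i. of_nat d * cpx w i)"
        by (rule ext) (simp add: cpx_def vsmul_def of_rat_mult)
      ultimately show ?thesis using omw
        by (auto simp: NS_def H2Z_def H2_def vsmul_def bil_smul_right)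
    qed
    have "bil (vsmul (of_nat my) y') (vsmul (of_nat d) w) = 0"
      using my(2) dw by (auto simp: TS_def)
    then have "of_nat my * (of_nat d * bil y' w) = 0"
      by (simp add: vsmul_def[abs_def] bil_smul_left bil_smul_right)
    then have yw: "bil y' w = 0" using my(1) dpos by simp
    have e1: "bil y' v2 - v1 * bil B y' = 0"
      using yw unfolding w_def by (simp add: bil_diff_smul_right bil_sym[of B])
    have "mpair (msmul (of_nat mz) z) v = 0" using mz(2) v by (auto simp: TB_def)
    then have zv: "mpair z v = 0" using mz(1) by (simp add: mpair_smul)
    have "mpair (msmul (of_nat myy) y) v = 0" using myy(2) v by (auto simp: TB_def)
    then have yv: "mpair y v = 0" using myy(1) by (simp add: mpair_smul)
    have "mpair u v = mpair z v - (bil y' v2 - v1 * bil B y') + N * mpair y v"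
      by (simp add: u_def Z Y V mpair_def bil_lin3_left) (simp add: algebra_simps)
    then show ?thesis using zv yv e1 by simp
  qed
  have uTB: "u \<in> TB \<omega> B" using uMZ uorth by (simp add: TB_def)
  have "msub z (eB B (0, y', 0)) = madd u (msmul (of_int (- Ni)) y)"
    unfolding G by (simp add: u_def Y madd_def msmul_def Ni[symmetric])
  then show "msub z (eB B (0, y', 0)) \<in> gen_by (TB \<omega> B) y"
    using uTB unfolding gen_by_def by blast
qed
end
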